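(* Let $\alpha'\in (1/2, 1)$. For every $\varepsilon'\in (0, (1-\alpha')/3)$ there exist $\delta >0$ and $n_0'$ such that the following holds for all $n>n_0'$: every $n$-vertex graph $G$ with at least $\lfloor n^2/4\rfloor+1$ edges, minimum degree at least $(1-\delta)n/2$, and $b(G)<\alpha' n/2$ satisfies $$t(G) > (\alpha'(1-\alpha')-4\varepsilon')\frac{n^2}{4}.$$
   Context: Graphs are finite and simple. A book of size $b$ in a graph is an edge that lies in $b$ triangles; $b(G)$ denotes the maximum size of a book in $G$, i.e. the maximum, over all edges $e$ of $G$, of the number of triangles of $G$ containing $e$. $t(G)$ denotes the number of triangles in $G$. *)

theory Defs
  imports Complex_Main
begin

definition simple_graph :: "'a set \<Rightarrow> 'a set set \<Rightarrow> bool" where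
  "simple_graph V E \<longleftrightarrow> finite V \<and> (\<forall>e\<in>E. e \<subseteq> V \<and> card e = 2)"

definition degree :: "'a set set \<Rightarrow> 'a \<Rightarrow> nat" where
  "degree E v = card {u. {u, v} \<in> E}"

definition triangles :: "'a set \<Rightarrow> 'a set set \<Rightarrow> 'a set set" where
  "triangles V E = {T. T \<subseteq> V \<and> card T = 3 \<and> (\<forall>x\<in>T. \<forall>y\<in>T. x \<noteq> y \<longrightarrow> {x, y} \<in> E)}"

definition num_triangles :: "'a set \<Rightarrow> 'a set set \<Rightarrow> nat" where
  "num_triangles V E = card (triangles V E)"

definition book_size :: "'a set \<Rightarrow> 'a set set \<Rightarrow> 'a set \<Rightarrow> nat" where
  "book_size V E e = card {T \<in> triangles V E. e \<subseteq> T}"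

definition max_book :: "'a set \<Rightarrow> 'a set set \<Rightarrow> nat" where
  "max_book V E = (if E = {} then 0 else Max (book_size V E ` E))"

end

theory Submission
  imports Defs
begin


definition nb :: "'a set set \<Rightarrow> 'a \<Rightarrow> 'a set" where
  "nb E u = {v. {u,v} \<in> E}"

lemma nb_sub: "simple_graph V E \<Longrightarrow> nb E u \<subseteq> V"
  unfolding simple_graph_def nb_def by blast

lemma nb_fin: "simple_graph V E \<Longrightarrow> finite (nb E u)"
  using nb_sub simple_graph_def finite_subset by metis

lemma nb_irrefl: "simple_graph V E \<Longrightarrow> u \<notin> nb E u"
  unfolding simple_graph_def nb_def by fastforce

lemma nb_sym: "v \<in> nb E u \<longleftrightarrow> u \<in> nb E v"
  unfolding nb_def by (simp add: insert_commute)

lemma nb_memV: assumes "simple_graph V E" "v \<in> nb E u" shows "u \<in> V"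
proof -
  have "{u,v} \<in> E" using assms(2) unfolding nb_def by simp
  then show ?thesis using assms(1) unfolding simple_graph_def by blast
qed

lemma degree_nb: "degree E u = card (nb E u)"
  unfolding degree_def nb_def by (simp add: insert_commute)

lemma E_fin: assumes "simple_graph V E" shows "finite E"
proof -
  have 1: "E \<subseteq> Pow V" using assms unfolding simple_graph_def by blast
  have 2: "finite (Pow V)" using assms unfolding simple_graph_def by simp
  show ?thesis using finite_subset[OF 1 2] .
qed

lemma card_inter_sum: "finite Y \<Longrightarrow> card (A \<inter> Y) = (\<Sum>v\<in>Y. if v \<in> A then 1 else (0::nat))"
  by (simp add: sum.If_cases Int_commute)

lemma double_count:
  assumes "finite X" "finite Y"
  shows "(\<Sum>u\<in>X. card (nb E u \<inter> Y)) = (\<Sum>v\<in>Y. card (nb E v \<inter> X))"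
proof -
  have "(\<Sum>u\<in>X. card (nb E u \<inter> Y)) = (\<Sum>u\<in>X. \<Sum>v\<in>Y. if v \<in> nb E u then 1 else (0::nat))"
    using assms by (simp add: card_inter_sum)
  also have "\<dots> = (\<Sum>v\<in>Y. \<Sum>u\<in>X. if v \<in> nb E u then 1 else (0::nat))"
    by (rule sum.swap)
  also have "\<dots> = (\<Sum>v\<in>Y. \<Sum>u\<in>X. if u \<in> nb E v then 1 else (0::nat))"
    by (simp add: nb_sym)
  also have "\<dots> = (\<Sum>v\<in>Y. card (nb E v \<inter> X))"
    using assms by (simp add: card_inter_sum)
  finally show ?thesis .
qed

definition cut :: "'a set set \<Rightarrow> 'a set \<Rightarrow> nat" where
  "cut E X = (\<Sum>u\<in>X. card (nb E u - X))"

lemma cut_alt: "simple_graph V E \<Longrightarrow> X \<subseteq> V \<Longrightarrow> cut E X = (\<Sum>u\<in>X. card (nb E u \<inter> (V - X)))"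
  unfolding cut_def by (intro sum.cong refl arg_cong[where f=card]) (use nb_sub[of V E] in blast)

lemma cut_sym:
  assumes "simple_graph V E" "X \<subseteq> V"
  shows "cut E (V - X) = cut E X"
proof -
  have fV: "finite V" using assms simple_graph_def by auto
  have "cut E (V - X) = (\<Sum>u\<in>V - X. card (nb E u \<inter> (V - (V - X))))"
    using cut_alt[OF assms(1)] by blast
  also have "V - (V - X) = X" using assms by auto
  also have "(\<Sum>u\<in>V - X. card (nb E u \<inter> X)) = (\<Sum>u\<in>X. card (nb E u \<inter> (V - X)))"
    using double_count[of "V - X" X E] fV assms(2) finite_subset by auto
  also have "\<dots> = cut E X" using cut_alt[OF assms] by simp
  finally show ?thesis .
qed

lemma cut_remove:
  assumes "simple_graph V E" "X \<subseteq> V" "y \<in> X"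
  shows "cut E (X - {y}) + card (nb E y - X) = cut E X + card (nb E y \<inter> X)"
proof -
  have fV: "finite V" using assms simple_graph_def by auto
  have fX: "finite X" using fV assms finite_subset by auto
  have fin: "\<And>u. finite (nb E u)" using nb_fin[OF assms(1)] .
  have 1: "\<And>u. u \<in> X - {y} \<Longrightarrow> card (nb E u - (X - {y})) = card (nb E u - X) + (if y \<in> nb E u then 1 else 0)"
  proof -
    fix u assume u: "u \<in> X - {y}"
    have "nb E u - (X - {y}) = (nb E u - X) \<union> (nb E u \<inter> {y})" using assms(3) by auto
    moreover have "card ((nb E u - X) \<union> (nb E u \<inter> {y})) = card (nb E u - X) + card (nb E u \<inter> {y})"
      by (rule card_Un_disjoint) (use fin assms(3) in auto)
    moreover have "card (nb E u \<inter> {y}) = (if y \<in> nb E u then 1 else 0)" by auto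
    ultimately show "card (nb E u - (X - {y})) = card (nb E u - X) + (if y \<in> nb E u then 1 else 0)" by simp
  qed
  have "cut E (X - {y}) = (\<Sum>u\<in>X - {y}. card (nb E u - X) + (if y \<in> nb E u then 1 else 0))"
    unfolding cut_def using 1 by (rule sum.cong[OF refl])
  also have "\<dots> = (\<Sum>u\<in>X - {y}. card (nb E u - X)) + (\<Sum>u\<in>X - {y}. if y \<in> nb E u then 1 else 0)"
    by (rule sum.distrib)
  also have "(\<Sum>u\<in>X - {y}. if y \<in> nb E u then 1 else (0::nat)) = card (nb E y \<inter> (X - {y}))"
    using fX by (simp add: card_inter_sum nb_sym)
  also have "nb E y \<inter> (X - {y}) = nb E y \<inter> X" using nb_irrefl[OF assms(1)] by auto
  finally have a: "cut E (X - {y}) = (\<Sum>u\<in>X - {y}. card (nb E u - X)) + card (nb E y \<inter> X)" .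
  have b: "cut E X = card (nb E y - X) + (\<Sum>u\<in>X - {y}. card (nb E u - X))"
    unfolding cut_def using fX assms(3) by (simp add: sum.remove)
  show ?thesis using a b by simp
qed



lemma edge_neq: "simple_graph V E \<Longrightarrow> {x,y} \<in> E \<Longrightarrow> x \<noteq> y"
  unfolding simple_graph_def by fastforce

lemma edge_V: "simple_graph V E \<Longrightarrow> {x,y} \<in> E \<Longrightarrow> x \<in> V \<and> y \<in> V"
  unfolding simple_graph_def by blast

lemma tri_mem:
  assumes G: "simple_graph V E" and e: "{x,y} \<in> E" "{y,z} \<in> E" "{x,z} \<in> E"
  shows "{x,y,z} \<in> triangles V E"
proof -
  have d: "x \<noteq> y" "y \<noteq> z" "x \<noteq> z" using edge_neq[OF G] e by auto
  have "{x,y,z} \<subseteq> V" using edge_V[OF G] e by auto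
  moreover have "card {x,y,z} = 3" using d by auto
  moreover have "\<forall>a\<in>{x,y,z}. \<forall>b\<in>{x,y,z}. a \<noteq> b \<longrightarrow> {a,b} \<in> E"
    using e by (auto simp: insert_commute)
  ultimately show ?thesis unfolding triangles_def by blast
qed

lemma tri_fin: "simple_graph V E \<Longrightarrow> finite (triangles V E)"
  unfolding triangles_def simple_graph_def
  by (rule finite_subset[of _ "Pow V"]) auto

lemma book_ge:
  assumes G: "simple_graph V E" and e: "{x,y} \<in> E"
  shows "card (nb E x \<inter> nb E y) \<le> book_size V E {x,y}"
  unfolding book_size_def
proof (rule card_inj_on_le[where f="\<lambda>z. {x,y,z}"])
  show "inj_on (\<lambda>z. {x, y, z}) (nb E x \<inter> nb E y)"
  proof (rule inj_onI)
    fix a b assume a: "a \<in> nb E x \<inter> nb E y" and b: "b \<in> nb E x \<inter> nb E y" and eq: "{x,y,a} = {x,y,b}"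
    have "a \<noteq> x" "a \<noteq> y" "b \<noteq> x" "b \<noteq> y" using a b nb_irrefl[OF G] by auto
    then show "a = b" using eq by (metis insertE insertI1 insert_commute singletonD)
  qed
  show "(\<lambda>z. {x, y, z}) ` (nb E x \<inter> nb E y) \<subseteq> {T \<in> triangles V E. {x, y} \<subseteq> T}"
  proof
    fix T assume "T \<in> (\<lambda>z. {x, y, z}) ` (nb E x \<inter> nb E y)"
    then obtain z where z: "z \<in> nb E x" "z \<in> nb E y" and T: "T = {x,y,z}" by auto
    have "{y,z} \<in> E" "{x,z} \<in> E" using z unfolding nb_def by auto
    then show "T \<in> {T \<in> triangles V E. {x, y} \<subseteq> T}" using tri_mem[OF G e] T by auto
  qed
  show "finite {T \<in> triangles V E. {x, y} \<subseteq> T}" using tri_fin[OF G] by auto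
qed

lemma book_le_max:
  assumes G: "simple_graph V E" and e: "e \<in> E"
  shows "book_size V E e \<le> max_book V E"
  unfolding max_book_def using e E_fin[OF G] by auto

lemma R_bound:
  assumes G: "simple_graph V E"
  shows "(\<Sum>w\<in>V. \<Sum>u\<in>nb E w. card (nb E u \<inter> nb E w)) \<le> 27 * num_triangles V E"
proof -
  have fV: "finite V" using G simple_graph_def by auto
  have fn: "\<And>u. finite (nb E u)" using nb_fin[OF G] .
  let ?Q = "SIGMA w:V. SIGMA u:nb E w. (nb E u \<inter> nb E w)"
  have "card ?Q = (\<Sum>w\<in>V. card (SIGMA u:nb E w. (nb E u \<inter> nb E w)))"
    using fV fn by (intro card_SigmaI) auto
  also have "\<dots> = (\<Sum>w\<in>V. \<Sum>u\<in>nb E w. card (nb E u \<inter> nb E w))"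
    using fn by (intro sum.cong refl card_SigmaI) auto
  finally have eq: "card ?Q = (\<Sum>w\<in>V. \<Sum>u\<in>nb E w. card (nb E u \<inter> nb E w))" .
  have sub: "?Q \<subseteq> (\<Union>T\<in>triangles V E. T \<times> T \<times> T)"
  proof
    fix q assume "q \<in> ?Q"
    then obtain w u z where q: "q = (w,u,z)" and u: "u \<in> nb E w" and z: "z \<in> nb E u" "z \<in> nb E w" by auto
    have "{w,u} \<in> E" "{u,z} \<in> E" "{w,z} \<in> E" using u z unfolding nb_def by auto
    then have "{w,u,z} \<in> triangles V E" using tri_mem[OF G] by blast
    then show "q \<in> (\<Union>T\<in>triangles V E. T \<times> T \<times> T)" using q by blast
  qed
  have "card ?Q \<le> card (\<Union>T\<in>triangles V E. T \<times> T \<times> T)"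
    using sub tri_fin[OF G] by (intro card_mono) (auto simp: triangles_def intro: finite_subset[OF _ fV])
  also have "\<dots> \<le> (\<Sum>T\<in>triangles V E. card (T \<times> T \<times> T))"
    using tri_fin[OF G] by (rule card_UN_le)
  also have "\<dots> = (\<Sum>T\<in>triangles V E. 27)"
    by (intro sum.cong refl) (auto simp: triangles_def card_cartesian_product)
  also have "\<dots> = 27 * num_triangles V E" unfolding num_triangles_def by simp
  finally show ?thesis using eq by simp
qed

lemma Ty_bound:
  assumes G: "simple_graph V E" and S: "S \<subseteq> V" and y: "y \<in> S"
  shows "(\<Sum>x\<in>nb E y \<inter> S. card (nb E x \<inter> nb E y \<inter> (V - S))) \<le> num_triangles V E"
proof -
  have fn: "\<And>u. finite (nb E u)" using nb_fin[OF G] .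
  let ?Q = "SIGMA x:nb E y \<inter> S. (nb E x \<inter> nb E y \<inter> (V - S))"
  have eq: "card ?Q = (\<Sum>x\<in>nb E y \<inter> S. card (nb E x \<inter> nb E y \<inter> (V - S)))"
    using fn by (intro card_SigmaI) auto
  have "card ?Q \<le> card (triangles V E)"
  proof (rule card_inj_on_le[where f="\<lambda>(x,z). {y,x,z}"])
    show "inj_on (\<lambda>(x,z). {y,x,z}) ?Q"
    proof (rule inj_onI)
      fix p q assume p: "p \<in> ?Q" and q: "q \<in> ?Q" and eq: "(\<lambda>(x,z). {y,x,z}) p = (\<lambda>(x,z). {y,x,z}) q"
      obtain x z where pxz: "p = (x,z)" by (cases p)
      obtain x' z' where qxz: "q = (x',z')" by (cases q)
      have h: "x \<in> S" "x' \<in> S" "z \<notin> S" "z' \<notin> S" "x \<noteq> y" "x' \<noteq> y"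
        using p q pxz qxz nb_irrefl[OF G, of y] by auto
      have e2: "{y,x,z} = {y,x',z'}" using eq pxz qxz by simp
      have "z = z'" using e2 h y by (metis insertE singletonD insertI1 insertI2)
      moreover have "x = x'" using e2 h y by (metis insertE singletonD insertI1 insertI2)
      ultimately show "p = q" using pxz qxz by simp
    qed
    show "(\<lambda>(x,z). {y,x,z}) ` ?Q \<subseteq> triangles V E"
    proof
      fix T assume "T \<in> (\<lambda>(x,z). {y,x,z}) ` ?Q"
      then obtain x z where x: "x \<in> nb E y" and z: "z \<in> nb E x" "z \<in> nb E y" and T: "T = {y,x,z}" by auto
      have "{y,x} \<in> E" "{x,z} \<in> E" "{y,z} \<in> E" using x z unfolding nb_def by auto
      then show "T \<in> triangles V E" using tri_mem[OF G] T by blast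
    qed
    show "finite (triangles V E)" using tri_fin[OF G] .
  qed
  then show ?thesis using eq unfolding num_triangles_def by simp
qed



lemma card_split: "finite A \<Longrightarrow> card (A \<inter> B) + card (A - B) = card A"
  by (metis card_Int_Diff Int_commute) 

lemma maxcut_exists:
  assumes G: "simple_graph V E"
  shows "\<exists>A\<subseteq>V. \<forall>X\<subseteq>V. cut E X \<le> cut E A"
proof -
  have fV: "finite V" using G simple_graph_def by auto
  have f: "finite (cut E ` Pow V)" using fV by auto
  have ne: "cut E ` Pow V \<noteq> {}" by auto
  obtain A where A: "A \<in> Pow V" "cut E A = Max (cut E ` Pow V)" using Max_in[OF f ne] by auto
  show ?thesis using A f by (intro exI[of _ A]) auto
qed

lemma local_max:
  assumes G: "simple_graph V E" and S: "S \<subseteq> V" and mx: "\<forall>X\<subseteq>V. cut E X \<le> cut E S" and u: "u \<in> S"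
  shows "card (nb E u \<inter> S) \<le> card (nb E u \<inter> (V - S))"
proof -
  have "S - {u} \<subseteq> V" using S by auto
  then have "cut E (S - {u}) \<le> cut E S" using mx by blast
  moreover have "cut E (S - {u}) + card (nb E u - S) = cut E S + card (nb E u \<inter> S)"
    using cut_remove[OF G S u] .
  moreover have "nb E u - S = nb E u \<inter> (V - S)" using nb_sub[OF G] by blast
  ultimately show ?thesis by simp
qed

lemma deg_split:
  assumes G: "simple_graph V E" and S: "S \<subseteq> V"
  shows "card (nb E u \<inter> (V - S)) + card (nb E u \<inter> S) = degree E u"
proof -
  have "nb E u \<inter> (V - S) = nb E u - S" using nb_sub[OF G] by blast
  then show ?thesis using card_split[OF nb_fin[OF G], of u S] degree_nb[of E u] by simp
qed

lemma mu_p: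
  assumes G: "simple_graph V E"
  shows "card ((V - S) - nb E u) + card (nb E u \<inter> (V - S)) = card (V - S)"
proof -
  have "finite (V - S)" using G simple_graph_def by auto
  then show ?thesis using card_split[of "V - S" "nb E u"] by (simp add: Int_commute add.commute)
qed

lemma common_ge:
  assumes G: "simple_graph V E"
  shows "real (card (V - S)) - real (card ((V - S) - nb E x)) - real (card ((V - S) - nb E y))
     \<le> real (card (nb E x \<inter> nb E y \<inter> (V - S)))"
proof -
  have fV: "finite V" using G simple_graph_def by auto
  have "V - S \<subseteq> (nb E x \<inter> nb E y \<inter> (V - S)) \<union> ((V - S) - nb E x) \<union> ((V - S) - nb E y)" by blast
  then have "card (V - S) \<le> card ((nb E x \<inter> nb E y \<inter> (V - S)) \<union> ((V - S) - nb E x) \<union> ((V - S) - nb E y))"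
    using fV by (intro card_mono) auto
  also have "\<dots> \<le> card (nb E x \<inter> nb E y \<inter> (V - S)) + card ((V - S) - nb E x) + card ((V - S) - nb E y)"
    by (metis (no_types, lifting) add_le_mono1 card_Un_le le_trans)
  finally show ?thesis by linarith
qed

lemma book_bound:
  assumes G: "simple_graph V E" and e: "{x,y} \<in> E"
  shows "real (card (nb E x \<inter> nb E y \<inter> (V - S))) \<le> real (max_book V E)"
proof -
  have "card (nb E x \<inter> nb E y \<inter> (V - S)) \<le> card (nb E x \<inter> nb E y)"
    using nb_fin[OF G] by (intro card_mono) auto
  also have "\<dots> \<le> book_size V E {x,y}" using book_ge[OF G e] .
  also have "\<dots> \<le> max_book V E" using book_le_max[OF G e] .
  finally show ?thesis by simp
qed

lemma cut_le_prod:
  assumes G: "simple_graph V E" and S: "S \<subseteq> V"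
  shows "cut E S \<le> card S * card (V - S)"
proof -
  have fV: "finite V" using G simple_graph_def by auto
  have "cut E S = (\<Sum>u\<in>S. card (nb E u \<inter> (V - S)))" using cut_alt[OF G S] .
  also have "\<dots> \<le> (\<Sum>u\<in>S. card (V - S))" using fV by (intro sum_mono card_mono) auto
  finally show ?thesis by simp
qed

lemma mS_eq:
  assumes G: "simple_graph V E" and S: "S \<subseteq> V"
  shows "(\<Sum>u\<in>S. card ((V - S) - nb E u)) + cut E S = card S * card (V - S)"
proof -
  have "(\<Sum>u\<in>S. card ((V - S) - nb E u)) + cut E S
      = (\<Sum>u\<in>S. card ((V - S) - nb E u) + card (nb E u \<inter> (V - S)))"
    using cut_alt[OF G S] by (simp add: sum.distrib)
  also have "\<dots> = (\<Sum>u\<in>S. card (V - S))" using mu_p[OF G] by simp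
  finally show ?thesis by simp
qed

lemma edge_inside:
  assumes G: "simple_graph V E" and A: "A \<subseteq> V" and big: "card E > cut E A"
  shows "\<exists>x y. {x,y} \<in> E \<and> ((x \<in> A \<and> y \<in> A) \<or> (x \<in> V - A \<and> y \<in> V - A))"
proof (rule ccontr)
  assume no: "\<not> ?thesis"
  have fV: "finite V" using G simple_graph_def by auto
  let ?Q = "SIGMA u:A. (nb E u - A)"
  have fQ: "finite ?Q" using fV A nb_fin[OF G] by (intro finite_SigmaI) (auto intro: finite_subset)
  have cQ: "card ?Q = cut E A" unfolding cut_def using fV A nb_fin[OF G]
    by (intro card_SigmaI) (auto intro: finite_subset)
  have "E \<subseteq> (\<lambda>(u,v). {u,v}) ` ?Q"
  proof
    fix e assume e: "e \<in> E"
    then obtain u v where uv: "e = {u,v}" "u \<in> V" "v \<in> V"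
      using G unfolding simple_graph_def by (metis card_2_iff subset_iff insertI1 insertI2)
    have euv: "{u,v} \<in> E" using e uv by simp
    then have "{v,u} \<in> E" by (simp add: insert_commute)
    show "e \<in> (\<lambda>(u,v). {u,v}) ` ?Q"
    proof (cases "u \<in> A")
      case True
      then have "v \<notin> A" using no euv by blast
      then have "(u,v) \<in> ?Q" using True euv unfolding nb_def by auto
      then show ?thesis using uv by force
    next
      case False
      then have "v \<in> A" using no euv uv by blast
      then have "(v,u) \<in> ?Q" using False \<open>{v,u} \<in> E\<close> unfolding nb_def by auto
      then show ?thesis using uv by (force simp: insert_commute)
    qed
  qed
  then have "card E \<le> card ((\<lambda>(u,v). {u,v}) ` ?Q)" using fQ by (intro card_mono) auto
  also have "\<dots> \<le> card ?Q" using card_image_le fQ by blast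
  finally show False using cQ big by simp
qed



lemma cut_plus:
  assumes G: "simple_graph V E" and fX: "finite X"
  shows "cut E X + (\<Sum>u\<in>X. card (nb E u \<inter> X)) = (\<Sum>u\<in>X. card (nb E u))"
  unfolding cut_def sum.distrib[symmetric]
  using card_split[OF nb_fin[OF G]] by (intro sum.cong refl) (simp add: add.commute)

lemma exists_small_P:
  assumes G: "simple_graph V E" and n: "card V = n" "n > 0"
  shows "\<exists>w\<in>V. n * (\<Sum>u\<in>nb E w. card (nb E u \<inter> nb E w)) \<le> 27 * num_triangles V E"
proof (rule ccontr)
  assume "\<not> ?thesis"
  then have lt: "\<forall>w\<in>V. 27 * num_triangles V E < n * (\<Sum>u\<in>nb E w. card (nb E u \<inter> nb E w))" by auto
  have fV: "finite V" using G simple_graph_def by auto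
  have ne: "V \<noteq> {}" using n by auto
  have "(\<Sum>w\<in>V. 27 * num_triangles V E) < (\<Sum>w\<in>V. n * (\<Sum>u\<in>nb E w. card (nb E u \<inter> nb E w)))"
    using lt by (intro sum_strict_mono[OF fV ne]) auto
  also have "\<dots> = n * (\<Sum>w\<in>V. \<Sum>u\<in>nb E w. card (nb E u \<inter> nb E w))" by (simp add: sum_distrib_left)
  also have "\<dots> \<le> n * (27 * num_triangles V E)" using R_bound[OF G] by simp
  finally show False using n by simp
qed

lemma prod_le_quarter:
  assumes "k \<le> (n::nat)"
  shows "k * (n - k) \<le> n^2 div 4"
proof -
  have "real (4 * (k * (n - k))) = 4 * real k * (real n - real k)" using assms by (simp add: of_nat_diff)
  also have "\<dots> \<le> real n ^ 2"
  proof -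
    have "real n ^ 2 - 4 * real k * (real n - real k) = (real n - 2 * real k)^2"
      by (simp add: power2_eq_square algebra_simps)
    then show ?thesis using zero_le_power2[of "real n - 2 * real k"] by linarith
  qed
  finally have "4 * (k * (n - k)) \<le> n^2" by (metis of_nat_le_iff of_nat_power)
  then show ?thesis by (simp add: less_eq_div_iff_mult_less_eq mult.commute)
qed



lemma main:
  fixes a e \<gamma> \<delta> :: real and n :: nat and V :: "'a set" and E
  assumes a: "1/2 < a" "a < 1" and e: "0 < e" "e < (1-a)/3"
  and \<gamma>: "\<gamma> = e*(1-a)/16" and \<delta>: "\<delta> = \<gamma>^2"
  and nbig: "real n \<ge> 64/\<delta> + 64/((1-a)*e) + 16/e"
  and G: "simple_graph V E" and cV: "card V = n" and cE: "card E \<ge> n^2 div 4 + 1"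
  and deg: "\<forall>v\<in>V. real (degree E v) \<ge> (1-\<delta>)*real n/2"
  and bk: "real (max_book V E) < a * real n / 2"
  shows "real (num_triangles V E) > (a*(1-a) - 4*e) * real n ^ 2 / 4"
proof (rule ccontr)
  assume "\<not> ?thesis"
  then have tle: "real (num_triangles V E) \<le> (a*(1-a) - 4*e) * real n ^ 2 / 4" by simp
  define t where "t = real (num_triangles V E)"
  define N where "N = real n"
  have tle': "t \<le> (a*(1-a) - 4*e) * N^2 / 4" using tle unfolding t_def N_def .
  have fV: "finite V" using G simple_graph_def by auto
  have ea: "e*(1-a) > 0" using a e by simp
  have \<gamma>pos: "\<gamma> > 0" using \<gamma> ea by simp
  have \<delta>pos: "\<delta> > 0" using \<delta> \<gamma>pos by simp
  have \<gamma>small: "\<gamma> \<le> (1-a)/48"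
  proof -
    have "(3*e)*(1-a) \<le> 1*(1-a)" using e a by (intro mult_right_mono) auto
    then show ?thesis using \<gamma> by simp
  qed
  have \<gamma>le1: "\<gamma> \<le> 1" using \<gamma>small a(1) a(2) by (simp add: field_simps)
  have \<delta>le\<gamma>: "\<delta> \<le> \<gamma>" using \<delta> \<gamma>le1 \<gamma>pos by (simp add: power2_eq_square mult_left_le)
  have \<delta>1: "\<delta> \<le> (1-a)*e/32"
  proof -
    have "\<delta> = \<gamma> * (e*(1-a)/16)" by (simp add: \<delta> \<gamma> power2_eq_square)
    also have "\<dots> \<le> (1/2) * (e*(1-a)/16)" using \<gamma>small e a by (intro mult_right_mono) auto
    finally show ?thesis by (simp add: mult.commute)
  qed
  have \<delta>e: "\<delta> \<le> e/4"
  proof -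
    have "(1-a)*e \<le> 1*e" using a e by (intro mult_right_mono) auto
    then show ?thesis using \<delta>1 e by linarith
  qed
  have pos1: "64/\<delta> > 0" "64/((1-a)*e) > 0" "16/e > 0" using \<delta>pos a e by auto
  have N1: "N \<ge> 64/\<delta>" "N \<ge> 64/((1-a)*e)" "N \<ge> 16/e" using nbig pos1 unfolding N_def by linarith+
  have Npos: "N > 0" using N1 pos1 by linarith
  have npos: "n > 0" using Npos N_def by simp
  have NdN: "\<delta> * N \<ge> 64" using N1(1) \<delta>pos by (simp add: field_simps)
  have NeN: "(1-a)*e*N \<ge> 64" using N1(2) a e by (simp add: field_simps)
  have NeN2: "e * N \<ge> 16" using N1(3) e by (simp add: field_simps)
  have aa: "a*(1-a) \<le> 1/4"
  proof -
    have "1/4 - a*(1-a) = (a - 1/2)^2" by (simp add: power2_eq_square algebra_simps)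
    then show ?thesis using zero_le_power2[of "a - 1/2"] by linarith
  qed
  have t16: "t \<le> N^2/16"
  proof -
    have "(a*(1-a) - 4*e) * N^2 / 4 \<le> (1/4) * N^2 / 4"
      using aa e by (intro divide_right_mono mult_right_mono) auto
    moreover have "t \<le> (a*(1-a) - 4*e) * N^2 / 4" using tle unfolding t_def N_def .
    ultimately show ?thesis by linarith
  qed
  obtain w where w: "w \<in> V" and wP: "n * (\<Sum>u\<in>nb E w. card (nb E u \<inter> nb E w)) \<le> 27 * num_triangles V E"
    using exists_small_P[OF G cV npos] by blast
  define P where "P = real (\<Sum>u\<in>nb E w. card (nb E u \<inter> nb E w))"
  have P2: "P \<le> 2 * N"
  proof -
    have "N * P \<le> 27 * t" using wP unfolding P_def N_def t_def by (metis of_nat_le_iff of_nat_mult of_nat_numeral)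
    also have "\<dots> \<le> 27 * (N^2/16)" using t16 by simp
    finally have "N * P \<le> N * (27 * N / 16)" by (simp add: power2_eq_square)
    then have "P \<le> 27*N/16" using Npos by (simp add: mult_le_cancel_left_pos)
    then show ?thesis using Npos by linarith
  qed
  define c where "c = (1-\<delta>)*N/2"
  have cpos: "c \<ge> 0" using \<delta>le\<gamma> \<gamma>le1 Npos unfolding c_def by simp
  have degc: "\<And>v. v \<in> V \<Longrightarrow> real (degree E v) \<ge> c" using deg unfolding c_def N_def by simp
  have cutw: "real (cut E (nb E w)) \<ge> c*c - 2*N"
  proof -
    have eq: "cut E (nb E w) + (\<Sum>u\<in>nb E w. card (nb E u \<inter> nb E w)) = (\<Sum>u\<in>nb E w. card (nb E u))"
      using cut_plus[OF G nb_fin[OF G]] .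
    have "(\<Sum>u\<in>nb E w. real (card (nb E u))) \<ge> (\<Sum>u\<in>nb E w. c)"
    proof (rule sum_mono)
      fix u assume "u \<in> nb E w"
      then have "u \<in> V" using nb_sub[OF G] by blast
      then show "c \<le> real (card (nb E u))" using degc degree_nb by metis
    qed
    then have "real (\<Sum>u\<in>nb E w. card (nb E u)) \<ge> real (card (nb E w)) * c" by simp
    moreover have "real (card (nb E w)) \<ge> c" using degc[OF w] degree_nb by metis
    moreover have "real (card (nb E w)) * c \<ge> c * c" using calculation(2) cpos by (simp add: mult_right_mono)
    ultimately have "real (\<Sum>u\<in>nb E w. card (nb E u)) \<ge> c * c" by linarith
    moreover have "real (cut E (nb E w)) + P = real (\<Sum>u\<in>nb E w. card (nb E u))"
      unfolding P_def using eq by (metis of_nat_add)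
    ultimately show ?thesis using P2 by linarith
  qed
  obtain A where A: "A \<subseteq> V" and mxA: "\<forall>X\<subseteq>V. cut E X \<le> cut E A" using maxcut_exists[OF G] by blast
  have "cut E (nb E w) \<le> cut E A" using mxA nb_sub[OF G, of w] by blast
  then have cutA: "real (cut E A) \<ge> c*c - 2*N" using cutw by linarith
  have "cut E A \<le> card A * card (V - A)" using cut_le_prod[OF G A] .
  also have "\<dots> \<le> n^2 div 4"
  proof -
    have fA: "finite A" using fV A finite_subset by blast
    have "card (V - A) = n - card A" using cV fA A by (simp add: card_Diff_subset)
    moreover have "card A \<le> n" using cV fV A card_mono by metis
    ultimately show ?thesis using prod_le_quarter by simp
  qed
  finally have "card E > cut E A" using cE by simp
  then obtain x0 y0 where e0: "{x0,y0} \<in> E" and side: "(x0 \<in> A \<and> y0 \<in> A) \<or> (x0 \<in> V - A \<and> y0 \<in> V - A)"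
    using edge_inside[OF G A] by blast
  obtain S where S: "S \<subseteq> V" and mxS: "\<forall>X\<subseteq>V. cut E X \<le> cut E S" and cutS: "cut E S = cut E A"
    and xyS: "x0 \<in> S" "y0 \<in> S"
  proof (cases "x0 \<in> A \<and> y0 \<in> A")
    case True then show ?thesis using that A mxA by blast
  next
    case False
    then have "x0 \<in> V - A" "y0 \<in> V - A" using side by auto
    moreover have "cut E (V - A) = cut E A" using cut_sym[OF G A] .
    ultimately show ?thesis using that[of "V - A"] mxA by auto
  qed
  define \<mu> where "\<mu> u = real (card ((V - S) - nb E u))" for u
  define p where "p u = real (card (nb E u \<inter> (V - S)))" for u
  define \<beta> where "\<beta> u = real (card (nb E u \<inter> S))" for u
  define s where "s = real (card (V - S))"
  define k where "k = real (card S)"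
  define mS where "mS = (\<Sum>u\<in>S. \<mu> u)"
  have ks: "k + s = N"
  proof -
    have fS: "finite S" using fV S finite_subset by blast
    have "card (V - S) = n - card S" using cV fS S by (simp add: card_Diff_subset)
    moreover have "card S \<le> n" using cV fV S card_mono by metis
    ultimately have "card S + card (V - S) = n" by simp
    then show ?thesis unfolding k_def s_def N_def by (metis of_nat_add)
  qed
  have mSeq: "mS + real (cut E S) = k * s"
    using mS_eq[OF G S] unfolding mS_def \<mu>_def k_def s_def by (metis of_nat_add of_nat_mult of_nat_sum)
  have cutS': "real (cut E S) \<ge> c*c - 2*N" using cutS cutA by simp
  have cc: "c*c \<ge> N^2/4 - \<delta>*N^2/2"
  proof -
    have "c*c = N^2/4 - \<delta>*N^2/2 + (\<delta>*N)^2/4" unfolding c_def by (simp add: power2_eq_square field_simps)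
    then show ?thesis using zero_le_power2[of "\<delta>*N"] by linarith
  qed
  have mS0: "mS \<ge> 0" unfolding mS_def \<mu>_def by (intro sum_nonneg) auto
  have ksq: "k * s \<le> N^2/4"
  proof -
    have "N^2/4 - k*s = ((k - s)/2)^2" unfolding ks[symmetric] by (simp add: power2_eq_square algebra_simps)
    then show ?thesis using zero_le_power2[of "(k-s)/2"] by linarith
  qed
  have mSle: "mS \<le> \<delta>*N^2/2 + 2*N" using mSeq cutS' cc ksq by linarith
  have fS: "finite S" using fV S finite_subset by blast
  have mSge0: "\<And>X. X \<subseteq> S \<Longrightarrow> (\<Sum>u\<in>X. \<mu> u) \<le> mS"
    unfolding mS_def using fS by (intro sum_mono2) (auto simp: \<mu>_def)
  have sbound: "s \<le> N/2 + \<gamma>*N"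
  proof -
    have "(s - N/2)^2 = N^2/4 - k*s" unfolding ks[symmetric] by (simp add: power2_eq_square algebra_simps)
    also have "\<dots> \<le> \<delta>*N^2/2 + 2*N" using mSeq cutS' cc mS0 by linarith
    also have "\<dots> \<le> \<delta>*N^2"
    proof -
      have "2*N*4 \<le> (\<delta>*N)*N" using NdN Npos by (simp add: mult_right_mono)
      moreover have "\<delta>*N^2 = (\<delta>*N)*N" by (simp add: power2_eq_square)
      ultimately show ?thesis using Npos by linarith
    qed
    also have "\<dots> = (\<gamma>*N)^2" using \<delta> by (simp add: power2_eq_square)
    finally have "(s - N/2)^2 \<le> (\<gamma>*N)^2" .
    then have "s - N/2 \<le> \<gamma>*N" by (rule power2_le_imp_le) (use \<gamma>pos Npos in simp)
    then show ?thesis by simp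
  qed
  have loc: "\<And>u. u \<in> S \<Longrightarrow> \<beta> u \<le> p u" using local_max[OF G S mxS] unfolding \<beta>_def p_def by simp
  have dsp: "\<And>u. u \<in> S \<Longrightarrow> p u + \<beta> u \<ge> c"
  proof -
    fix u assume u: "u \<in> S"
    have "p u + \<beta> u = real (degree E u)" unfolding p_def \<beta>_def using deg_split[OF G S, of u] by (metis of_nat_add)
    then show "p u + \<beta> u \<ge> c" using degc u S by auto
  qed
  have mup: "\<And>u. \<mu> u + p u = s" unfolding \<mu>_def p_def s_def using mu_p[OF G] by (metis of_nat_add)
  have book: "\<And>u v. {u,v} \<in> E \<Longrightarrow> s - \<mu> u - \<mu> v < a*N/2"
  proof -
    fix u v assume uv: "{u,v} \<in> E"
    have "s - \<mu> u - \<mu> v \<le> real (card (nb E u \<inter> nb E v \<inter> (V - S)))"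
      unfolding s_def \<mu>_def using common_ge[OF G] .
    also have "\<dots> \<le> real (max_book V E)" using book_bound[OF G uv] .
    finally show "s - \<mu> u - \<mu> v < a*N/2" using bk unfolding N_def by simp
  qed
  obtain x y where exy: "{x,y} \<in> E" and xyS': "x \<in> S" "y \<in> S" and mxy: "\<mu> x \<le> \<mu> y"
  proof (cases "\<mu> x0 \<le> \<mu> y0")
    case True then show ?thesis using that e0 xyS by blast
  next
    case False
    have "{y0,x0} \<in> E" using e0 by (simp add: insert_commute)
    then show ?thesis using that xyS False by auto
  qed
  define Y where "Y = nb E y \<inter> S"
  have fY: "finite Y" unfolding Y_def using nb_fin[OF G] by simp
  have bY: "\<beta> y = real (card Y)" unfolding \<beta>_def Y_def by simp
  have YE: "\<And>z. z \<in> Y \<Longrightarrow> {z,y} \<in> E" unfolding Y_def nb_def by (auto simp: insert_commute)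
  have sumY: "(\<Sum>z\<in>Y. \<mu> z) \<le> mS" using mSge0 unfolding Y_def by auto
  show False
  proof (cases "p y \<le> a*N/2 + (e/2)*N")
    case True
    have "(\<Sum>z\<in>Y. s - \<mu> z - \<mu> y) \<le> (\<Sum>z\<in>Y. real (card (nb E z \<inter> nb E y \<inter> (V - S))))"
      unfolding s_def \<mu>_def by (intro sum_mono common_ge[OF G])
    also have "\<dots> = real (\<Sum>z\<in>Y. card (nb E z \<inter> nb E y \<inter> (V - S)))" by simp
    also have "\<dots> \<le> t" unfolding t_def Y_def using Ty_bound[OF G S xyS'(2)] by (simp only: of_nat_le_iff)
    finally have T1: "(\<Sum>z\<in>Y. s - \<mu> z - \<mu> y) \<le> t" .
    have "(\<Sum>z\<in>Y. s - \<mu> z - \<mu> y) = (\<Sum>z\<in>Y. p y - \<mu> z)"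
      using mup[of y] by (intro sum.cong refl) linarith
    also have "\<dots> = \<beta> y * p y - (\<Sum>z\<in>Y. \<mu> z)"
      using bY by (simp add: sum_subtractf)
    finally have T2: "t \<ge> \<beta> y * p y - (\<Sum>z\<in>Y. \<mu> z)" using T1 by linarith
    then have T2: "t \<ge> \<beta> y * p y - mS" using T1 sumY by linarith
    define b where "b = a*N/2 + (e/2)*N"
    have hb: "\<beta> y \<ge> c - p y" "\<beta> y \<le> p y" "p y \<le> b" using dsp[OF xyS'(2)] loc[OF xyS'(2)] True b_def by auto
    have py0: "p y \<ge> 0" unfolding p_def by simp
    have "\<beta> y * p y \<ge> (c - p y) * p y" using hb py0 by (simp add: mult_right_mono)
    moreover have "(c - p y) * p y - (c - b) * b = (b - p y) * (p y + b - c)" by (simp add: algebra_simps)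
    moreover have "(b - p y) * (p y + b - c) \<ge> 0" using hb by (intro mult_nonneg_nonneg) auto
    ultimately have T3: "\<beta> y * p y \<ge> (c - b) * b" by linarith
    have cb: "c - b \<ge> 0"
    proof -
      have "c - b = ((1 - \<delta> - a)/2 - e/2) * N" unfolding c_def b_def by (simp add: field_simps)
      moreover have "(1 - \<delta> - a)/2 - e/2 \<ge> 0" using \<delta>le\<gamma> \<gamma>small e a by (simp add: field_simps)
      ultimately show ?thesis using Npos by simp
    qed
    have "(c - b) * b \<ge> (c - b) * (a*N/2)" using cb e Npos unfolding b_def by (intro mult_left_mono) auto
    also have "(c - b) * (a*N/2) = (a*(1-a)/4 - a*\<delta>/4 - a*e/4) * N^2"
      unfolding c_def b_def by (simp add: power2_eq_square field_simps)
    finally have T4: "t \<ge> (a*(1-a)/4 - a*\<delta>/4 - a*e/4) * N^2 - \<delta>*N^2/2 - 2*N"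
      using T2 T3 mSle by linarith
    have co: "a*\<delta>/4 + a*e/4 + \<delta>/2 \<le> e - (9/16)*e"
    proof -
      have "a*\<delta> \<le> \<delta>" "a*e \<le> e" using a \<delta>pos e by (simp_all add: mult_le_cancel_right1)
      then show ?thesis using \<delta>e by linarith
    qed
    define Q where "Q = N^2"
    have T4': "t \<ge> (a*(1-a)/4)*Q - (a*\<delta>/4 + a*e/4 + \<delta>/2)*Q - 2*N"
    proof -
      have "(a*(1-a)/4 - a*\<delta>/4 - a*e/4) * N^2 - \<delta>*N^2/2 = (a*(1-a)/4)*Q - (a*\<delta>/4 + a*e/4 + \<delta>/2)*Q"
        unfolding Q_def by (simp add: field_simps)
      then show ?thesis using T4 by linarith
    qed
    have Qco: "(a*\<delta>/4 + a*e/4 + \<delta>/2)*Q \<le> (e - (9/16)*e)*Q"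
      by (rule mult_right_mono[OF co]) (simp add: Q_def)
    have id1: "(e - (9/16)*e)*Q = e*Q - (9/16)*e*Q" by (simp add: field_simps)
    have id2: "(a*(1-a) - 4*e) * N^2 / 4 = (a*(1-a)/4)*Q - e*Q" unfolding Q_def by (simp add: field_simps)
    have big: "(9/16)*e*Q > 2*N"
    proof -
      have "16*N \<le> (e*N)*N" by (rule mult_right_mono[OF NeN2]) (use Npos in simp)
      moreover have "(9/16)*e*Q = (9/16)*((e*N)*N)" unfolding Q_def by (simp add: power2_eq_square)
      ultimately show ?thesis using Npos by linarith
    qed
    have "t \<le> (a*(1-a)/4)*Q - e*Q" using tle' id2 by linarith
    then show False using T4' Qco id1 big by linarith
  next
    case False
    have hz: "\<And>z. z \<in> Y \<Longrightarrow> \<mu> z \<ge> (e/2)*N"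
    proof -
      fix z assume z: "z \<in> Y"
      have "s - \<mu> z - \<mu> y < a*N/2" using book[OF YE[OF z]] .
      then show "\<mu> z \<ge> (e/2)*N" using mup[of y] False by linarith
    qed
    have "(\<Sum>z\<in>Y. (e/2)*N) \<le> (\<Sum>z\<in>Y. \<mu> z)" using hz by (intro sum_mono) auto
    then have L1: "\<beta> y * ((e/2)*N) \<le> mS" using sumY bY by simp
    have "s - \<mu> x - \<mu> y < a*N/2" using book[OF exy] .
    then have "2 * p y < a*N/2 + s" using mup[of y] mxy by linarith
    then have "p y < a*N/4 + N/4 + \<gamma>*N/2" using sbound by linarith
    then have "\<beta> y > c - (a*N/4 + N/4 + \<gamma>*N/2)" using dsp[OF xyS'(2)] by linarith
    moreover have "c - (a*N/4 + N/4 + \<gamma>*N/2) \<ge> (1-a)*N/8"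
    proof -
      have "c - (a*N/4 + N/4 + \<gamma>*N/2) - (1-a)*N/8 = ((1-a)/8 - \<delta>/2 - \<gamma>/2)*N"
        unfolding c_def by (simp add: field_simps)
      moreover have "(1-a)/8 - \<delta>/2 - \<gamma>/2 \<ge> 0" using \<delta>le\<gamma> \<gamma>small a by (simp add: field_simps)
      then have "((1-a)/8 - \<delta>/2 - \<gamma>/2)*N \<ge> 0" using Npos by simp
      ultimately show ?thesis by linarith
    qed
    ultimately have hby: "\<beta> y \<ge> (1-a)*N/8" by linarith
    have "(1-a)*N/8 * ((e/2)*N) \<le> \<beta> y * ((e/2)*N)"
      by (rule mult_right_mono[OF hby]) (use e Npos in simp)
    moreover have "(1-a)*N/8 * ((e/2)*N) = ((1-a)*e*N)*N/16" by (simp add: field_simps)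
    ultimately have L2: "((1-a)*e*N)*N/16 \<le> mS" using L1 by linarith
    have "\<delta>*N^2 \<le> ((1-a)*e/32)*N^2" by (rule mult_right_mono[OF \<delta>1]) simp
    moreover have "((1-a)*e/32)*N^2 = ((1-a)*e*N)*N/32" by (simp add: field_simps power2_eq_square)
    moreover have "64*N \<le> ((1-a)*e*N)*N" by (rule mult_right_mono[OF NeN]) (use Npos in simp)
    ultimately show False using L2 mSle Npos by linarith
  qed
qed


theorem theorem5:
  fixes \<alpha>' :: real
  assumes "1/2 < \<alpha>'" and "\<alpha>' < 1"
  shows "\<forall>\<epsilon>'::real. 0 < \<epsilon>' \<and> \<epsilon>' < (1 - \<alpha>') / 3 \<longrightarrow>
    (\<exists>\<delta>::real > 0. \<exists>n0::nat. \<forall>n > n0. \<forall>(V :: nat set) (E :: nat set set).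
       simple_graph V E \<and> card V = n \<and>
       card E \<ge> (n^2) div 4 + 1 \<and>
       (\<forall>v\<in>V. real (degree E v) \<ge> (1 - \<delta>) * real n / 2) \<and>
       real (max_book V E) < \<alpha>' * real n / 2
       \<longrightarrow> real (num_triangles V E) > (\<alpha>' * (1 - \<alpha>') - 4 * \<epsilon>') * real n ^ 2 / 4)"
proof (intro allI impI)
  fix e :: real assume he: "0 < e \<and> e < (1 - \<alpha>') / 3"
  define \<gamma> where "\<gamma> = e*(1-\<alpha>')/16"
  define \<delta> where "\<delta> = \<gamma>^2"
  define K where "K = 64/\<delta> + 64/((1-\<alpha>')*e) + 16/e"
  have \<delta>pos: "\<delta> > 0" unfolding \<delta>_def \<gamma>_def using he assms by simp
  show "\<exists>\<delta>::real > 0. \<exists>n0::nat. \<forall>n > n0. \<forall>(V :: nat set) (E :: nat set set).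
       simple_graph V E \<and> card V = n \<and>
       card E \<ge> (n^2) div 4 + 1 \<and>
       (\<forall>v\<in>V. real (degree E v) \<ge> (1 - \<delta>) * real n / 2) \<and>
       real (max_book V E) < \<alpha>' * real n / 2
       \<longrightarrow> real (num_triangles V E) > (\<alpha>' * (1 - \<alpha>') - 4 * e) * real n ^ 2 / 4"
  proof (intro exI[of _ \<delta>] conjI \<delta>pos exI[of _ "nat \<lceil>K\<rceil>"] allI impI)
    fix n :: nat and V :: "nat set" and E :: "nat set set"
    assume n: "nat \<lceil>K\<rceil> < n"
    assume H: "simple_graph V E \<and> card V = n \<and> card E \<ge> (n^2) div 4 + 1 \<and>
       (\<forall>v\<in>V. real (degree E v) \<ge> (1 - \<delta>) * real n / 2) \<and>
       real (max_book V E) < \<alpha>' * real n / 2"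
    have "real n \<ge> K" using n by linarith
    then show "real (num_triangles V E) > (\<alpha>' * (1 - \<alpha>') - 4 * e) * real n ^ 2 / 4"
      using main[OF assms he[THEN conjunct1] he[THEN conjunct2] \<gamma>_def \<delta>_def] H unfolding K_def by blast
  qed
qed

end
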